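(* Let $K$ be a field of characteristic not equal to $2$ and let $S$ be a (unital, not necessarily associative) $K$-algebra equipped with a pseudo-degree function $\chi$. Let $a \in N(S)$ with $m=\chi(a)>0$, and suppose that the centralizer $C_S(a)$ satisfies condition $D(\ell)$ for some positive integer $\ell$. Then the subalgebra $K[a]$ of $S$ generated by $a$ is isomorphic to a polynomial ring in one variable over $K$, and $C_S(a)$ is a free left $K[a]$-module of rank at most $\ell m$.
   Context: All algebras are unital but not necessarily associative, and $K$ is embedded in $S$ via the unit. For $a,b,c\in S$, the nucleus $N(S)$ is the set of $a\in S$ such that $a(bc)=(ab)c$, $(ba)c=b(ac)$ and $(bc)a=b(ca)$ for all $b,c\in S$ (i.e. $a$ lies in the left, middle and right nuclei). The centralizer $C_S(a)$ is the set of elements of $S$ commuting with $a$. A pseudo-degree function on $S$ is a map $\chi:S\to\mathbb{Z}\cup\{-\infty\}$ such that $\chi(x)=-\infty$ iff $x=0$; $\chi(xy)=\chi(x)+\chi(y)$ for all $x,y\in S$; and $\chi(x+y)\le\max(\chi(x),\chi(y))$ for all $x,y\in S$. For $K$ of characteristic not $2$ and a positive integer $\ell$, a subalgebra $B\subseteq S$ satisfies condition $D(\ell)$ if $\chi(b)\ge 0$ for all nonzero $b\in B$, and whenever $b_1,\dots,b_{\ell+1}\in B$ all satisfy $\chi(b_1)=\dots=\chi(b_{\ell+1})$, there exist $\alpha_1,\dots,\alpha_{\ell+1}\in K$, not all zero, with $\chi\left(\sum_{i=1}^{\ell+1}\alpha_i b_i\right)<\chi(b_1)$. *)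

theory Defs
  imports "HOL-Computational_Algebra.Polynomial"
begin

definition nonassoc_algebra :: "('k::field \<Rightarrow> 's::{ab_group_add,times,one} \<Rightarrow> 's) \<Rightarrow> bool" where
  "nonassoc_algebra sc \<longleftrightarrow>
     Vector_Spaces.vector_space sc \<and>
     (\<forall>x y z::'s. (x + y) * z = x * z + y * z \<and> z * (x + y) = z * x + z * y) \<and>
     (\<forall>c x y. sc c (x * y) = sc c x * y \<and> sc c (x * y) = x * sc c y) \<and>
     (\<forall>x::'s. 1 * x = x \<and> x * 1 = x)"

definition nucleus :: "'s::times set" where
  "nucleus = {a. \<forall>b c. a * (b * c) = (a * b) * c \<and> (b * a) * c = b * (a * c)
                       \<and> (b * c) * a = b * (c * a)}"

definition centralizer :: "'s::times \<Rightarrow> 's set" where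
  "centralizer a = {x. x * a = a * x}"

text \<open>The value -\<infinity> at 0 is encoded by only
  constraining chi on nonzero elements (chi 0 is irrelevant); the conditions
  below are exactly the paper's conditions unfolded with -\<infinity> conventions.\<close>
definition pseudo_degree :: "('s::{zero,plus,times} \<Rightarrow> int) \<Rightarrow> bool" where
  "pseudo_degree chi \<longleftrightarrow>
     (\<forall>x y. x \<noteq> 0 \<longrightarrow> y \<noteq> 0 \<longrightarrow> x * y \<noteq> 0 \<and> chi (x * y) = chi x + chi y) \<and>
     (\<forall>x y. x \<noteq> 0 \<longrightarrow> y \<noteq> 0 \<longrightarrow> x + y \<noteq> 0 \<longrightarrow> chi (x + y) \<le> max (chi x) (chi y))"

definition cond_D :: "('k::field \<Rightarrow> 's::{ab_group_add,times,one} \<Rightarrow> 's) \<Rightarrow> ('s \<Rightarrow> int) \<Rightarrow> nat \<Rightarrow> 's set \<Rightarrow> bool" where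
  "cond_D sc chi l B \<longleftrightarrow>
     (\<forall>b\<in>B. b \<noteq> 0 \<longrightarrow> chi b \<ge> 0) \<and>
     (\<forall>bs::nat \<Rightarrow> 's. (\<forall>i\<le>l. bs i \<in> B \<and> bs i \<noteq> 0 \<and> chi (bs i) = chi (bs 0)) \<longrightarrow>
        (\<exists>\<alpha>::nat \<Rightarrow> 'k. (\<exists>i\<le>l. \<alpha> i \<noteq> 0) \<and>
           ((\<Sum>i\<le>l. sc (\<alpha> i) (bs i)) = 0 \<or> chi (\<Sum>i\<le>l. sc (\<alpha> i) (bs i)) < chi (bs 0))))"

definition subalgebra :: "('k::field \<Rightarrow> 's::{ab_group_add,times,one} \<Rightarrow> 's) \<Rightarrow> 's set \<Rightarrow> bool" where
  "subalgebra sc B \<longleftrightarrow> 1 \<in> B \<and> (\<forall>x\<in>B. \<forall>y\<in>B. x + y \<in> B \<and> x * y \<in> B) \<and> (\<forall>c. \<forall>x\<in>B. sc c x \<in> B)"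

definition gen_subalg :: "('k::field \<Rightarrow> 's::{ab_group_add,times,one} \<Rightarrow> 's) \<Rightarrow> 's \<Rightarrow> 's set" where
  "gen_subalg sc a = \<Inter>{B. subalgebra sc B \<and> a \<in> B}"

definition poly_alg_iso :: "('k::field \<Rightarrow> 's::{ab_group_add,times,one} \<Rightarrow> 's) \<Rightarrow> ('k poly \<Rightarrow> 's) \<Rightarrow> 's set \<Rightarrow> bool" where
  "poly_alg_iso sc f A \<longleftrightarrow> bij_betw f UNIV A \<and>
     (\<forall>p q. f (p + q) = f p + f q \<and> f (p * q) = f p * f q) \<and>
     (\<forall>c p. f (smult c p) = sc c (f p)) \<and> f 1 = 1"

definition left_basis :: "'s::{ab_group_add,times} set \<Rightarrow> 's set \<Rightarrow> 's set \<Rightarrow> bool" where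
  "left_basis R M E \<longleftrightarrow> finite E \<and> E \<subseteq> M \<and>
     (\<forall>c\<in>M. \<exists>!p. (\<forall>e\<in>E. p e \<in> R) \<and> (\<forall>e. e \<notin> E \<longrightarrow> p e = 0) \<and> c = (\<Sum>e\<in>E. p e * e))"

end

theory Submission
  imports Defs
begin

locale setting = vector_space sc
  for sc :: "'k::field \<Rightarrow> 's::{ab_group_add,times,one} \<Rightarrow> 's" +
  fixes chi :: "'s \<Rightarrow> int" and a :: 's and l :: nat
  assumes distl: "\<And>x y z::'s. z * (x + y) = z * x + z * y"
    and distr: "\<And>x y z::'s. (x + y) * z = x * z + y * z"
    and scl: "\<And>c x y. sc c (x * y) = sc c x * y"
    and scr: "\<And>c x y. sc c (x * y) = x * sc c y"
    and one_l: "\<And>x::'s. 1 * x = x" and one_r: "\<And>x::'s. x * 1 = x"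
    and nzmult: "\<And>x y::'s. x \<noteq> 0 \<Longrightarrow> y \<noteq> 0 \<Longrightarrow> x * y \<noteq> 0"
    and chi_mult: "\<And>x y::'s. x \<noteq> 0 \<Longrightarrow> y \<noteq> 0 \<Longrightarrow> chi (x * y) = chi x + chi y"
    and chi_add: "\<And>x y::'s. x \<noteq> 0 \<Longrightarrow> y \<noteq> 0 \<Longrightarrow> x + y \<noteq> 0 \<Longrightarrow> chi (x + y) \<le> max (chi x) (chi y)"
    and nl: "\<And>b c. a * (b * c) = (a * b) * c"
    and nm: "\<And>b c. (b * a) * c = b * (a * c)"
    and nr: "\<And>b c. (b * c) * a = b * (c * a)"
    and a_nz: "a \<noteq> 0" and m_pos: "chi a > 0" and l_pos: "l > 0"
    and condD: "cond_D sc chi l (centralizer a)"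
begin

lemma mult_0_left[simp]: "0 * (x::'s) = 0"
  using distr[where z=x and x=0 and y=0] by simp
lemma mult_0_right[simp]: "(x::'s) * 0 = 0"
proof -
  have "x * 0 = x * 0 + x * 0" using distl[where z=x and x=0 and y=0] by simp
  then show ?thesis by simp
qed
lemma mult_minus_left: "(- (x::'s)) * y = - (x * y)"
proof -
  have "x * y + (- x) * y = 0" using distr[where z=y and x=x and y="-x"] by simp
  then show ?thesis by (metis minus_unique)
qed
lemma mult_minus_right: "y * (- (x::'s)) = - (y * x)"
proof -
  have "y * x + y * (- x) = 0" using distl[where z=y and x=x and y="-x"] by simp
  then show ?thesis by (metis minus_unique)
qed
lemma mult_diff_left: "((x::'s) - z) * y = x * y - z * y"
  by (simp only: diff_conv_add_uminus distr mult_minus_left)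
lemma mult_diff_right: "y * ((x::'s) - z) = y * x - y * z"
  by (simp only: diff_conv_add_uminus distl mult_minus_right)
lemma sum_mult_left: "(\<Sum>i\<in>A. g i) * (y::'s) = (\<Sum>i\<in>A. g i * y)"
  by (induction A rule: infinite_finite_induct) (auto simp: distr)
lemma sum_mult_right: "(y::'s) * (\<Sum>i\<in>A. g i) = (\<Sum>i\<in>A. y * g i)"
  by (induction A rule: infinite_finite_induct) (auto simp: distl)
lemma sc_mult_left: "sc c x * (y::'s) = sc c (x * y)" by (simp add: scl)
lemma sc_mult_right: "(x::'s) * sc c y = sc c (x * y)" by (simp add: scr)

definition ev :: "'k poly \<Rightarrow> 's" where
  "ev P = fold_coeffs (\<lambda>c acc. sc c 1 + a * acc) P 0"

lemma ev_0[simp]: "ev 0 = 0" by (simp add: ev_def)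
lemma ev_pCons: "ev (pCons c P) = sc c 1 + a * ev P"
  by (cases "c = 0 \<and> P = 0") (auto simp: ev_def)

lemma ev_add: "ev (P + Q) = ev P + ev Q"
proof (induction P arbitrary: Q)
  case 0 then show ?case by simp
next
  case (pCons c P)
  show ?case
    by (cases Q) (simp add: ev_pCons pCons.IH distl scale_left_distrib)
qed

lemma ev_smult: "ev (smult c P) = sc c (ev P)"
  by (induction P) (simp_all add: ev_pCons scale_right_distrib sc_mult_right)

lemma ev_pCons0: "ev (pCons 0 P) = a * ev P"
  by (simp add: ev_pCons)

lemma ev_mult: "ev (P * Q) = ev P * ev Q"
proof (induction P)
  case 0 then show ?case by simp
next
  case (pCons c P)
  have "ev (pCons c P * Q) = sc c (ev Q) + a * (ev P * ev Q)"
    by (simp add: ev_add ev_smult ev_pCons0 pCons.IH)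
  also have "\<dots> = (sc c 1 + a * ev P) * ev Q"
    by (simp add: distr sc_mult_left one_l nl)
  finally show ?case by (simp add: ev_pCons)
qed

lemma ev_1[simp]: "ev 1 = 1"
  using ev_pCons[of 1 0] by (simp add: one_pCons)

lemma ev_X: "ev [:0,1:] = a"
  using ev_pCons[of 0 "[:1:]"] ev_pCons[of 1 0] by (simp add: one_r)

lemma ev_comm: "ev P * ev Q = ev Q * ev P"
  by (metis ev_mult mult.commute)

lemma ev_sum: "ev (\<Sum>i\<in>A. g i) = (\<Sum>i\<in>A. ev (g i))"
  by (induction A rule: infinite_finite_induct) (auto simp: ev_add)

definition pw :: "nat \<Rightarrow> 's" where "pw i = ev (monom 1 i)"

lemma ev_monom: "ev (monom c i) = sc c (pw i)"
proof -
  have "monom c i = smult c (monom 1 i)" by (simp add: smult_monom)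
  then show ?thesis by (simp add: ev_smult pw_def)
qed

lemma pw_0[simp]: "pw 0 = 1"
  by (simp add: pw_def monom_0 one_pCons[symmetric])
lemma pw_Suc: "pw (Suc i) = a * pw i"
  by (simp add: pw_def monom_Suc ev_pCons0)
lemma pw_add: "pw (i + j) = pw i * pw j"
  by (simp add: pw_def ev_mult[symmetric] mult_monom)

lemma ev_expand: "ev P = (\<Sum>i\<le>degree P. sc (coeff P i) (pw i))"
proof -
  have "ev P = ev (\<Sum>i\<le>degree P. monom (coeff P i) i)"
    by (simp add: poly_as_sum_of_monoms)
  also have "\<dots> = (\<Sum>i\<le>degree P. sc (coeff P i) (pw i))"
    by (simp add: ev_sum ev_monom)
  finally show ?thesis .
qed

lemma pw_assoc: "pw i * (pw j * (x::'s)) = pw (i + j) * x"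
proof (induction i)
  case 0 then show ?case by (simp add: one_l)
next
  case (Suc i)
  have "pw (Suc i) * (pw j * x) = a * (pw i * (pw j * x))"
    by (simp add: pw_Suc nl)
  also have "\<dots> = a * (pw (i + j) * x)" by (simp add: Suc.IH)
  also have "\<dots> = pw (Suc i + j) * x" by (simp add: pw_Suc nl)
  finally show ?case .
qed


lemma one_nz: "(1::'s) \<noteq> 0"
  using a_nz one_l[of a] by auto

lemma chi_one: "chi 1 = 0"
  using chi_mult[OF one_nz one_nz] one_l[of 1] by simp

lemma C_nonneg: "x \<in> centralizer a \<Longrightarrow> x \<noteq> 0 \<Longrightarrow> chi x \<ge> 0"
proof -
  have "\<forall>b\<in>centralizer a. b \<noteq> 0 \<longrightarrow> chi b \<ge> 0"
    using condD unfolding cond_D_def by (rule conjunct1)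
  then show "x \<in> centralizer a \<Longrightarrow> x \<noteq> 0 \<Longrightarrow> chi x \<ge> 0" by blast
qed

lemma sc1_C: "sc c 1 \<in> centralizer a"
  by (simp add: centralizer_def sc_mult_left sc_mult_right one_l one_r)

lemma chi_sc1: assumes "c \<noteq> 0" shows "chi (sc c 1) = 0"
proof -
  have nz: "sc c 1 \<noteq> 0" "sc (inverse c) 1 \<noteq> 0" using assms one_nz by auto
  have "sc c 1 * sc (inverse c) 1 = 1"
    using assms by (simp add: sc_mult_left sc_mult_right one_l)
  then have "chi (sc c 1) + chi (sc (inverse c) 1) = 0"
    using chi_mult[OF nz] chi_one by metis
  moreover have "chi (sc c 1) \<ge> 0" "chi (sc (inverse c) 1) \<ge> 0"
    using C_nonneg[OF sc1_C] nz by auto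
  ultimately show ?thesis by linarith
qed

lemma sc_as_mult: "sc c x = sc c 1 * x"
  by (simp add: sc_mult_left one_l)

lemma chi_sc: assumes "c \<noteq> 0" "x \<noteq> 0" shows "chi (sc c x) = chi x"
proof -
  have "sc c 1 \<noteq> 0" using assms one_nz by auto
  then have "chi (sc c 1 * x) = chi x" using chi_mult[of "sc c 1" x] assms chi_sc1 by simp
  then show ?thesis by (subst sc_as_mult)
qed

lemma chi_uminus: assumes "x \<noteq> 0" shows "chi (- x) = chi x"
  using chi_sc[of "-1" x] assms by simp

lemma chi_add_dom:
  assumes "x \<noteq> 0" "y = 0 \<or> chi y < chi x"
  shows "x + y \<noteq> 0 \<and> chi (x + y) = chi x"
proof (cases "y = 0")
  case True then show ?thesis using assms by simp
next
  case False
  then have lt: "chi y < chi x" using assms by simp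
  have ne: "x + y \<noteq> 0"
  proof
    assume "x + y = 0"
    then have "x = - y" by (simp add: eq_neg_iff_add_eq_0)
    then show False using lt chi_uminus[OF False] by simp
  qed
  have le: "chi (x + y) \<le> chi x" using chi_add[OF assms(1) False ne] lt by simp
  have "x = (x + y) + (- y)" by simp
  then have "chi x \<le> max (chi (x + y)) (chi (- y))"
    using chi_add[of "x + y" "- y"] ne False assms(1) by (metis neg_equal_0_iff_equal)
  then have "chi x \<le> chi (x + y)" using lt chi_uminus[OF False] by auto
  with le ne show ?thesis by simp
qed

lemma sum_low:
  assumes "finite F" "\<And>i. i \<in> F \<Longrightarrow> g i = 0 \<or> chi (g i) < M"
  shows "sum g F = 0 \<or> chi (sum g F) < M"
  using assms
proof (induction F rule: finite_induct)
  case empty then show ?case by simp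
next
  case (insert x F)
  have h1: "g x = 0 \<or> chi (g x) < M" using insert.prems by simp
  have h2: "sum g F = 0 \<or> chi (sum g F) < M" using insert.IH insert.prems by simp
  have "g x + sum g F = 0 \<or> chi (g x + sum g F) < M"
  proof (cases "g x = 0 \<or> sum g F = 0 \<or> g x + sum g F = 0")
    case True then show ?thesis using h1 h2 by auto
  next
    case False
    then show ?thesis using chi_add[of "g x" "sum g F"] h1 h2 by auto
  qed
  then show ?case using insert.hyps by simp
qed

lemma pw_nz: "pw i \<noteq> 0"
  by (induction i) (auto simp: pw_Suc one_nz a_nz nzmult)

lemma chi_pw: "chi (pw i) = int i * chi a"
  by (induction i) (auto simp: pw_Suc chi_one chi_mult pw_nz a_nz algebra_simps)

lemma ev_a_comm: "ev P * a = a * ev P"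
  using ev_comm[of P "[:0,1:]"] by (simp add: ev_X)

lemma ev_mult_C: assumes "x \<in> centralizer a" shows "ev P * x \<in> centralizer a"
proof -
  have xa: "x * a = a * x" using assms by (simp add: centralizer_def)
  have "(ev P * x) * a = ev P * (x * a)" by (simp add: nr)
  also have "\<dots> = ev P * (a * x)" by (simp add: xa)
  also have "\<dots> = (ev P * a) * x" by (simp add: nm)
  also have "\<dots> = (a * ev P) * x" by (simp add: ev_a_comm)
  also have "\<dots> = a * (ev P * x)" by (simp add: nl)
  finally show ?thesis by (simp add: centralizer_def)
qed

lemma pw_mult_C: "x \<in> centralizer a \<Longrightarrow> pw i * x \<in> centralizer a"
  unfolding pw_def by (rule ev_mult_C)

lemma C_subspace: "subspace (centralizer a)"
  unfolding subspace_def centralizer_def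
  by (auto simp: distl distr sc_mult_left sc_mult_right)

lemma one_C: "1 \<in> centralizer a"
  by (simp add: centralizer_def one_l one_r)


definition v :: "nat \<times> 's \<Rightarrow> 's" where "v x = pw (fst x) * snd x"

definition normal :: "(nat \<times> 's) set \<Rightarrow> bool" where
  "normal I \<longleftrightarrow> (\<forall>F \<beta> x0. finite F \<longrightarrow> F \<subseteq> I \<longrightarrow> x0 \<in> F \<longrightarrow> \<beta> x0 \<noteq> 0 \<longrightarrow>
     (\<Sum>x\<in>F. sc (\<beta> x) (v x)) \<noteq> 0 \<and> chi (v x0) \<le> chi (\<Sum>x\<in>F. sc (\<beta> x) (v x)))"

lemma normalD:
  assumes "normal I" "finite F" "F \<subseteq> I" "x0 \<in> F" "\<beta> x0 \<noteq> 0"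
  shows "(\<Sum>x\<in>F. sc (\<beta> x) (v x)) \<noteq> 0 \<and> chi (v x0) \<le> chi (\<Sum>x\<in>F. sc (\<beta> x) (v x))"
  using assms unfolding normal_def by blast

lemma normal_mono: "normal J \<Longrightarrow> I \<subseteq> J \<Longrightarrow> normal I"
  unfolding normal_def by blast

lemma normal_empty: "normal {}"
  unfolding normal_def by blast

lemma v0: "v (0, e) = e" by (simp add: v_def one_l)

lemma v_nz_E: assumes "normal (UNIV \<times> E)" "e \<in> E" shows "e \<noteq> 0"
proof -
  have "(\<Sum>x\<in>{(0,e)}. sc ((\<lambda>_. 1) x) (v x)) \<noteq> 0"
    using normalD[OF assms(1), of "{(0,e)}" "(0,e)" "\<lambda>_. 1"] assms(2) by auto
  then show ?thesis by (simp add: v0)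
qed

lemma chi_v: assumes "snd x \<noteq> 0" shows "v x \<noteq> 0 \<and> chi (v x) = int (fst x) * chi a + chi (snd x)"
  using assms by (simp add: v_def nzmult pw_nz chi_mult chi_pw)

lemma v_C: "snd x \<in> centralizer a \<Longrightarrow> v x \<in> centralizer a"
  by (simp add: v_def pw_mult_C)

lemma v_assoc: "pw i * v (j, e) = v (i + j, e)"
  by (simp add: v_def pw_assoc)

lemma card_class:
  assumes fin: "finite G" and GC: "G \<subseteq> centralizer a" and nG: "normal (UNIV \<times> G)"
    and cls: "\<forall>e\<in>G. chi e mod chi a = r"
  shows "card G \<le> l"
proof (rule ccontr)
  assume "\<not> card G \<le> l"
  then obtain G' where G': "G' \<subseteq> G" "card G' = Suc l" "finite G'"
    using obtain_subset_with_card_n[of "Suc l" G] by auto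
  obtain g where g: "bij_betw g {0..<Suc l} G'"
    using ex_bij_betw_nat_finite[OF G'(3)] G'(2) by auto
  have lset: "{0..<Suc l} = {..l}" by auto
  have gb: "bij_betw g {..l} G'" using g lset by simp
  have gin: "k \<le> l \<Longrightarrow> g k \<in> G'" for k using gb by (auto simp: bij_betw_def)
  have ginj: "inj_on g {..l}" using gb by (auto simp: bij_betw_def)
  define m where "m = chi a"
  have mpos: "m > 0" using m_pos by (simp add: m_def)
  have G'ne: "G' \<noteq> {}" using G'(2) by auto
  define N where "N = Max (chi ` G')"
  define ix where "ix e = nat ((N - chi e) div m)" for e
  have ixe: "int (ix e) * m + chi e = N" if "e \<in> G'" for e
  proof -
    have le: "chi e \<le> N" using that G'(3) by (simp add: N_def)
    have "N \<in> chi ` G'" using Max_in G'(3) G'ne unfolding N_def by blast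
    then obtain e' where e': "e' \<in> G'" "N = chi e'" by auto
    have "chi e mod m = r" "chi e' mod m = r" using cls that e' G'(1) by (auto simp: m_def)
    then have "m dvd (N - chi e)" using e' mod_eq_dvd_iff by metis
    then have "(N - chi e) mod m = 0" by simp
    then have "(N - chi e) div m * m = N - chi e" by (metis minus_mod_eq_div_mult diff_zero)
    moreover have "(N - chi e) div m \<ge> 0" using le mpos by (simp add: div_int_pos_iff)
    ultimately show ?thesis by (simp add: ix_def)
  qed
  have nzG: "e \<in> G \<Longrightarrow> e \<noteq> 0" for e using v_nz_E[OF nG] by blast
  define bs where "bs k = v (ix (g k), g k)" for k
  have bsp: "bs k \<in> centralizer a \<and> bs k \<noteq> 0 \<and> chi (bs k) = N" if "k \<le> l" for k
  proof -
    have gk: "g k \<in> G'" using gin that .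
    then have "g k \<noteq> 0" "g k \<in> centralizer a" using nzG G'(1) GC by auto
    then show ?thesis using chi_v[of "(ix (g k), g k)"] v_C[of "(ix (g k), g k)"] ixe[OF gk]
      by (simp add: bs_def m_def)
  qed
  have "\<forall>bs::nat \<Rightarrow> 's. (\<forall>i\<le>l. bs i \<in> centralizer a \<and> bs i \<noteq> 0 \<and> chi (bs i) = chi (bs 0)) \<longrightarrow>
        (\<exists>\<alpha>::nat \<Rightarrow> 'k. (\<exists>i\<le>l. \<alpha> i \<noteq> 0) \<and>
           ((\<Sum>i\<le>l. sc (\<alpha> i) (bs i)) = 0 \<or> chi (\<Sum>i\<le>l. sc (\<alpha> i) (bs i)) < chi (bs 0)))"
    using condD unfolding cond_D_def by (rule conjunct2)
  moreover have "\<forall>i\<le>l. bs i \<in> centralizer a \<and> bs i \<noteq> 0 \<and> chi (bs i) = chi (bs 0)"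
    using bsp by simp
  ultimately obtain \<alpha> :: "nat \<Rightarrow> 'k" where al: "\<exists>i\<le>l. \<alpha> i \<noteq> 0"
    and drop: "(\<Sum>i\<le>l. sc (\<alpha> i) (bs i)) = 0 \<or> chi (\<Sum>i\<le>l. sc (\<alpha> i) (bs i)) < chi (bs 0)"
    by blast
  obtain k0 where k0: "k0 \<le> l" "\<alpha> k0 \<noteq> 0" using al by blast
  define h where "h k = (ix (g k), g k)" for k
  define F where "F = h ` {..l}"
  have hinj: "inj_on h {..l}" using ginj by (auto simp: inj_on_def h_def)
  define \<beta> where "\<beta> (x :: nat \<times> 's) = \<alpha> (the_inv_into {..l} g (snd x))" for x
  have bh: "k \<le> l \<Longrightarrow> \<beta> (h k) = \<alpha> k" for k
    using the_inv_into_f_f[OF ginj] by (simp add: \<beta>_def h_def)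
  have sumeq: "(\<Sum>x\<in>F. sc (\<beta> x) (v x)) = (\<Sum>i\<le>l. sc (\<alpha> i) (bs i))"
  proof -
    have "(\<Sum>x\<in>F. sc (\<beta> x) (v x)) = (\<Sum>k\<in>{..l}. sc (\<beta> (h k)) (v (h k)))"
      unfolding F_def by (simp add: sum.reindex[OF hinj])
    also have "\<dots> = (\<Sum>i\<le>l. sc (\<alpha> i) (bs i))"
    proof (rule sum.cong)
      fix k assume "k \<in> {..l}"
      then show "sc (\<beta> (h k)) (v (h k)) = sc (\<alpha> k) (bs k)" using bh by (simp add: bs_def h_def)
    qed simp
    finally show ?thesis .
  qed
  have FI: "F \<subseteq> UNIV \<times> G" using gin G'(1) by (auto simp: F_def h_def)
  have "(\<Sum>x\<in>F. sc (\<beta> x) (v x)) \<noteq> 0 \<and> chi (v (h k0)) \<le> chi (\<Sum>x\<in>F. sc (\<beta> x) (v x))"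
    using normalD[OF nG _ FI, of "h k0" \<beta>] k0 bh by (simp add: F_def)
  moreover have "v (h k0) = bs k0" by (simp add: h_def bs_def)
  ultimately show False using drop sumeq bsp[OF k0(1)] bsp[of 0] by auto
qed

lemma card_bound:
  assumes fin: "finite E" and EC: "E \<subseteq> centralizer a" and nE: "normal (UNIV \<times> E)"
  shows "card E \<le> l * nat (chi a)"
proof -
  define m where "m = chi a"
  have mpos: "m > 0" using m_pos by (simp add: m_def)
  define A where "A r = {e\<in>E. chi e mod m = r}" for r
  have Eeq: "E = (\<Union>r\<in>{0..<m}. A r)"
    using mpos by (auto simp: A_def)
  have "card E = (\<Sum>r\<in>{0..<m}. card (A r))"
    unfolding Eeq by (rule card_UN_disjoint) (auto simp: A_def fin)
  also have "\<dots> \<le> of_nat (card {0..<m}) * l"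
  proof (rule sum_bounded_above)
    fix r assume "r \<in> {0..<m}"
    show "card (A r) \<le> l"
    proof (rule card_class[of _ r])
      show "finite (A r)" using fin by (simp add: A_def)
      show "A r \<subseteq> centralizer a" using EC by (auto simp: A_def)
      show "normal (UNIV \<times> A r)" by (rule normal_mono[OF nE]) (auto simp: A_def)
      show "\<forall>e\<in>A r. chi e mod chi a = r" by (auto simp: A_def m_def)
    qed
  qed
  also have "\<dots> = l * nat m" by simp
  finally show ?thesis by (simp add: m_def)
qed


lemma ext_normal:
  assumes fin: "finite E" and EC: "E \<subseteq> centralizer a" and nE: "normal (UNIV \<times> E)"
    and cC: "c \<in> centralizer a" and cnz: "c \<noteq> 0" and cns: "c \<notin> span (v ` (UNIV \<times> E))"
    and le: "\<forall>e\<in>E. chi e \<le> chi c"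
    and low: "\<forall>w\<in>centralizer a. w \<noteq> 0 \<longrightarrow> chi w < chi c \<longrightarrow> w \<in> span (v ` (UNIV \<times> E))"
  shows "normal (UNIV \<times> insert c E)"
  unfolding normal_def
proof (intro allI impI)
  fix F :: "(nat \<times> 's) set" and \<beta> :: "nat \<times> 's \<Rightarrow> 'k" and x0
  assume F: "finite F" and FI: "F \<subseteq> UNIV \<times> insert c E" and x0F: "x0 \<in> F" and bx0: "\<beta> x0 \<noteq> 0"
  define sp where "sp = span (v ` (UNIV \<times> E))"
  define F' where "F' = {x\<in>F. \<beta> x \<noteq> 0}"
  have F'F: "F' \<subseteq> F" and finF': "finite F'" using F by (auto simp: F'_def)
  have S_eq: "(\<Sum>x\<in>F. sc (\<beta> x) (v x)) = (\<Sum>x\<in>F'. sc (\<beta> x) (v x))"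
    by (rule sum.mono_neutral_right) (auto simp: F F'_def)
  have Enz: "e \<in> E \<Longrightarrow> e \<noteq> 0" for e using v_nz_E[OF nE] by blast
  have snz: "x \<in> F \<Longrightarrow> snd x \<noteq> 0" for x using FI cnz Enz by auto
  have vx: "x \<in> F \<Longrightarrow> v x \<noteq> 0 \<and> chi (v x) = int (fst x) * chi a + chi (snd x)" for x
    using chi_v snz by blast
  have sle: "x \<in> F \<Longrightarrow> chi (snd x) \<le> chi c" for x using FI le by auto
  have x0F': "x0 \<in> F'" using x0F bx0 by (simp add: F'_def)
  define M where "M = Max ((\<lambda>x. chi (v x)) ` F')"
  have Mge: "x \<in> F' \<Longrightarrow> chi (v x) \<le> M" for x using finF' by (auto simp: M_def)
  have "M \<in> (\<lambda>x. chi (v x)) ` F'" using finF' x0F' unfolding M_def by (intro Max_in) auto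
  then obtain xm where xm: "xm \<in> F'" "chi (v xm) = M" by auto
  define T where "T = {x\<in>F'. chi (v x) = M}"
  define R where "R = F' - T"
  have finT: "finite T" and finR: "finite R" using finF' by (auto simp: T_def R_def)
  have TF: "T \<subseteq> F" using F'F by (auto simp: T_def)
  have xmT: "xm \<in> T" using xm by (simp add: T_def)
  have split: "(\<Sum>x\<in>F'. sc (\<beta> x) (v x)) = (\<Sum>x\<in>T. sc (\<beta> x) (v x)) + (\<Sum>x\<in>R. sc (\<beta> x) (v x))"
  proof -
    have "F' = T \<union> R" "T \<inter> R = {}" by (auto simp: T_def R_def)
    then show ?thesis using finT finR by (simp add: sum.union_disjoint)
  qed
  have SR: "(\<Sum>x\<in>R. sc (\<beta> x) (v x)) = 0 \<or> chi (\<Sum>x\<in>R. sc (\<beta> x) (v x)) < M"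
  proof (rule sum_low[OF finR])
    fix x assume xR: "x \<in> R"
    then have xF': "x \<in> F'" and "chi (v x) \<noteq> M" by (auto simp: R_def T_def)
    then have lt: "chi (v x) < M" using Mge[OF xF'] by simp
    have "\<beta> x \<noteq> 0" "v x \<noteq> 0" using xF' vx F'F by (auto simp: F'_def)
    then show "sc (\<beta> x) (v x) = 0 \<or> chi (sc (\<beta> x) (v x)) < M" using lt chi_sc by simp
  qed
  have ST: "(\<Sum>x\<in>T. sc (\<beta> x) (v x)) \<noteq> 0 \<and> M \<le> chi (\<Sum>x\<in>T. sc (\<beta> x) (v x))"
  proof (cases "\<exists>i. (i, c) \<in> T")
    case False
    then have "T \<subseteq> UNIV \<times> E" using TF FI by auto
    from normalD[OF nE finT this xmT] show ?thesis
      using xm xmT by (simp add: T_def F'_def)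
  next
    case True
    then obtain i where iT: "(i, c) \<in> T" by blast
    show ?thesis
    proof (rule ccontr)
      assume neg: "\<not> ?thesis"
      define m where "m = chi a"
      have mpos: "m > 0" using m_pos by (simp add: m_def)
      have Mi: "M = int i * m + chi c" using iT vx[of "(i,c)"] TF by (auto simp: T_def m_def)
      have geq: "fst x \<ge> i" if "x \<in> T" for x
      proof -
        have "int (fst x) * m + chi (snd x) = M" using that vx[of x] TF by (auto simp: T_def m_def)
        then have "int (fst x) * m \<ge> int i * m" using sle[of x] TF that Mi by auto
        then show ?thesis using mpos by simp
      qed
      have eqc: "x = (i, c)" if "x \<in> T" "snd x = c" for x
      proof -
        have "int (fst x) * m + chi c = M" using that vx[of x] TF by (auto simp: T_def m_def)
        then have "int (fst x) * m = int i * m" using Mi by simp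
        then have "fst x = i" using mpos by simp
        then show ?thesis using that by (cases x) auto
      qed
      define W where "W = (\<Sum>x\<in>T. sc (\<beta> x) (v (fst x - i, snd x)))"
      have pwW: "pw i * W = (\<Sum>x\<in>T. sc (\<beta> x) (v x))"
        unfolding W_def sum_mult_right
      proof (rule sum.cong)
        fix x assume "x \<in> T"
        then have "i + (fst x - i) = fst x" using geq by simp
        then show "pw i * sc (\<beta> x) (v (fst x - i, snd x)) = sc (\<beta> x) (v x)"
          by (simp add: sc_mult_right v_assoc)
      qed simp
      have WC: "W \<in> centralizer a"
        unfolding W_def
      proof (rule subspace_sum[OF C_subspace])
        fix x assume "x \<in> T"
        then have "snd x \<in> insert c E" using TF FI by (auto simp: mem_Times_iff)
        then have "snd x \<in> centralizer a" using EC cC by auto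
        then show "sc (\<beta> x) (v (fst x - i, snd x)) \<in> centralizer a"
          by (intro subspace_scale[OF C_subspace] v_C) simp
      qed
      define T0 where "T0 = T - {(i, c)}"
      define W0 where "W0 = (\<Sum>x\<in>T0. sc (\<beta> x) (v (fst x - i, snd x)))"
      have Wsplit: "W = sc (\<beta> (i, c)) c + W0"
        unfolding W_def W0_def T0_def using iT finT by (simp add: sum.remove v0)
      have W0sp: "W0 \<in> sp"
        unfolding W0_def sp_def
      proof (rule span_sum)
        fix x assume xT0: "x \<in> T0"
        then have "x \<in> T" "x \<noteq> (i, c)" by (auto simp: T0_def)
        then have "snd x \<noteq> c" using eqc by blast
        moreover have "snd x \<in> insert c E" using \<open>x \<in> T\<close> TF FI by (auto simp: mem_Times_iff)
        ultimately have "snd x \<in> E" by simp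
        then have "v (fst x - i, snd x) \<in> v ` (UNIV \<times> E)" by auto
        then show "sc (\<beta> x) (v (fst x - i, snd x)) \<in> span (v ` (UNIV \<times> E))"
          by (intro span_scale span_base)
      qed
      have Wsp: "W \<in> sp"
      proof (cases "W = 0")
        case True then show ?thesis by (simp add: sp_def span_zero)
      next
        case False
        have ne: "pw i * W \<noteq> 0" using False pw_nz nzmult by blast
        have "chi (pw i * W) = int i * m + chi W" using False pw_nz chi_mult chi_pw by (simp add: m_def)
        moreover have "chi (pw i * W) < M" using neg ne pwW by auto
        ultimately have "chi W < chi c" using Mi by simp
        then show ?thesis using low WC False by (simp add: sp_def)
      qed
      have bic: "\<beta> (i, c) \<noteq> 0" using iT by (simp add: T_def F'_def)
      have "sc (\<beta> (i, c)) c = W - W0" using Wsplit by simp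
      then have "sc (\<beta> (i, c)) c \<in> sp" using Wsp W0sp by (simp add: sp_def span_diff)
      then have "sc (inverse (\<beta> (i, c))) (sc (\<beta> (i, c)) c) \<in> sp" unfolding sp_def by (rule span_scale)
      then have "c \<in> sp" using bic by simp
      then show False using cns by (simp add: sp_def)
    qed
  qed
  have "(\<Sum>x\<in>T. sc (\<beta> x) (v x)) + (\<Sum>x\<in>R. sc (\<beta> x) (v x)) \<noteq> 0 \<and>
        chi ((\<Sum>x\<in>T. sc (\<beta> x) (v x)) + (\<Sum>x\<in>R. sc (\<beta> x) (v x))) = chi (\<Sum>x\<in>T. sc (\<beta> x) (v x))"
    using ST SR by (intro chi_add_dom) auto
  moreover have "chi (v x0) \<le> M" using Mge x0F' by simp
  ultimately show "(\<Sum>x\<in>F. sc (\<beta> x) (v x)) \<noteq> 0 \<and> chi (v x0) \<le> chi (\<Sum>x\<in>F. sc (\<beta> x) (v x))"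
    using S_eq split ST by auto
qed


definition Qset :: "'s set \<Rightarrow> bool" where
  "Qset E \<longleftrightarrow> finite E \<and> E \<subseteq> centralizer a \<and> normal (UNIV \<times> E) \<and>
     (\<forall>w\<in>centralizer a. w \<noteq> 0 \<longrightarrow> (\<exists>e\<in>E. chi w < chi e) \<longrightarrow> w \<in> span (v ` (UNIV \<times> E)))"

lemma E_in_span: "e \<in> E \<Longrightarrow> e \<in> span (v ` (UNIV \<times> E))"
  by (rule span_base) (metis UNIV_I image_eqI mem_Sigma_iff v0)

lemma exists_basis:
  "\<exists>E. finite E \<and> E \<subseteq> centralizer a \<and> normal (UNIV \<times> E) \<and> centralizer a \<subseteq> span (v ` (UNIV \<times> E))"
proof -
  have Q0: "Qset {}" by (simp add: Qset_def normal_empty)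
  have bnd: "\<forall>E. Qset E \<longrightarrow> card E < Suc (l * nat (chi a))"
    using card_bound by (auto simp: Qset_def less_Suc_eq_le)
  obtain E0 where QE0: "Qset E0" and mx: "\<forall>E. Qset E \<longrightarrow> card E \<le> card E0"
    using ex_has_greatest_nat[of Qset "{}" card, OF Q0 bnd] by blast
  have fin: "finite E0" and EC: "E0 \<subseteq> centralizer a" and nE: "normal (UNIV \<times> E0)"
    and dn: "\<forall>w\<in>centralizer a. w \<noteq> 0 \<longrightarrow> (\<exists>e\<in>E0. chi w < chi e) \<longrightarrow> w \<in> span (v ` (UNIV \<times> E0))"
    using QE0 by (auto simp: Qset_def)
  have "centralizer a \<subseteq> span (v ` (UNIV \<times> E0))"
  proof (rule ccontr)
    assume "\<not> ?thesis"
    then obtain w where "w \<in> centralizer a" "w \<notin> span (v ` (UNIV \<times> E0))" by blast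
    then obtain c where c: "c \<in> centralizer a \<and> c \<notin> span (v ` (UNIV \<times> E0))"
      and cmin: "\<forall>y. y \<in> centralizer a \<and> y \<notin> span (v ` (UNIV \<times> E0)) \<longrightarrow> nat (chi c) \<le> nat (chi y)"
      using ex_has_least_nat[of "\<lambda>y. y \<in> centralizer a \<and> y \<notin> span (v ` (UNIV \<times> E0))" w "\<lambda>y. nat (chi y)"]
      by blast
    have cC: "c \<in> centralizer a" and cns: "c \<notin> span (v ` (UNIV \<times> E0))" using c by auto
    have cnz: "c \<noteq> 0" using cns span_zero by auto
    have c0: "chi c \<ge> 0" using C_nonneg cC cnz by blast
    have low: "\<forall>y\<in>centralizer a. y \<noteq> 0 \<longrightarrow> chi y < chi c \<longrightarrow> y \<in> span (v ` (UNIV \<times> E0))"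
    proof (intro ballI impI)
      fix y assume y: "y \<in> centralizer a" "y \<noteq> 0" "chi y < chi c"
      show "y \<in> span (v ` (UNIV \<times> E0))"
      proof (rule ccontr)
        assume "y \<notin> span (v ` (UNIV \<times> E0))"
        then have "nat (chi c) \<le> nat (chi y)" using cmin y by blast
        moreover have "chi y \<ge> 0" using C_nonneg y by blast
        ultimately show False using y(3) by simp
      qed
    qed
    have le: "\<forall>e\<in>E0. chi e \<le> chi c"
    proof
      fix e assume "e \<in> E0"
      show "chi e \<le> chi c"
      proof (rule ccontr)
        assume "\<not> chi e \<le> chi c"
        then have "c \<in> span (v ` (UNIV \<times> E0))" using dn cC cnz \<open>e \<in> E0\<close> by force
        then show False using cns by simp
      qed
    qed
    have cnE: "c \<notin> E0" using cns E_in_span by blast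
    have "Qset (insert c E0)"
      unfolding Qset_def
    proof (intro conjI)
      show "finite (insert c E0)" using fin by simp
      show "insert c E0 \<subseteq> centralizer a" using EC cC by simp
      show "normal (UNIV \<times> insert c E0)"
        by (rule ext_normal[OF fin EC nE cC cnz cns le low])
      show "\<forall>w\<in>centralizer a. w \<noteq> 0 \<longrightarrow> (\<exists>e\<in>insert c E0. chi w < chi e) \<longrightarrow>
              w \<in> span (v ` (UNIV \<times> insert c E0))"
      proof (intro ballI impI)
        fix w assume w: "w \<in> centralizer a" "w \<noteq> 0" "\<exists>e\<in>insert c E0. chi w < chi e"
        then have "chi w < chi c" using le by force
        then have "w \<in> span (v ` (UNIV \<times> E0))" using low w by blast
        moreover have "span (v ` (UNIV \<times> E0)) \<subseteq> span (v ` (UNIV \<times> insert c E0))"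
          by (rule span_mono) blast
        ultimately show "w \<in> span (v ` (UNIV \<times> insert c E0))" by blast
      qed
    qed
    then have "card (insert c E0) \<le> card E0" using mx by blast
    then show False using cnE fin by simp
  qed
  then show ?thesis using fin EC nE by blast
qed

lemma normal_one: "normal (UNIV \<times> {1})"
proof -
  have "normal (UNIV \<times> insert 1 {})"
  proof (rule ext_normal)
    show "1 \<notin> span (v ` (UNIV \<times> {}))" using one_nz by simp
    show "\<forall>w\<in>centralizer a. w \<noteq> 0 \<longrightarrow> chi w < chi 1 \<longrightarrow> w \<in> span (v ` (UNIV \<times> {}))"
      using C_nonneg chi_one by force
  qed (auto simp: normal_empty one_C one_nz)
  then show ?thesis by simp
qed

lemma ev_expandN: assumes "degree P \<le> N" shows "ev P = (\<Sum>i\<le>N. sc (coeff P i) (pw i))"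
proof -
  have "ev P = (\<Sum>i\<le>degree P. sc (coeff P i) (pw i))" by (rule ev_expand)
  also have "\<dots> = (\<Sum>i\<le>N. sc (coeff P i) (pw i))"
    by (rule sum.mono_neutral_left) (use assms in \<open>auto simp: coeff_eq_0\<close>)
  finally show ?thesis .
qed

lemma ev_diff: "ev (P - Q) = ev P - ev Q"
  using ev_add[of "P - Q" Q] by (simp add: eq_diff_eq)

lemma ev_inj: "inj ev"
proof (rule injI)
  fix P Q assume eq: "ev P = ev Q"
  define R where "R = P - Q"
  have R0: "ev R = 0" using eq by (simp add: R_def ev_diff)
  show "P = Q"
  proof (rule ccontr)
    assume "P \<noteq> Q"
    then have Rnz: "R \<noteq> 0" by (simp add: R_def)
    define d where "d = degree R"
    define h where "h i = (i, (1::'s))" for i :: nat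
    have hinj: "inj_on h {..d}" by (simp add: inj_on_def h_def)
    define \<beta> where "\<beta> (x :: nat \<times> 's) = coeff R (fst x)" for x
    have "(\<Sum>x\<in>h ` {..d}. sc (\<beta> x) (v x)) = (\<Sum>i\<in>{..d}. sc (\<beta> (h i)) (v (h i)))"
      by (simp add: sum.reindex[OF hinj])
    also have "\<dots> = (\<Sum>i\<le>d. sc (coeff R i) (pw i))"
      by (simp add: h_def \<beta>_def v_def one_r)
    also have "\<dots> = 0" using R0 ev_expand[of R] by (simp add: d_def)
    finally have z: "(\<Sum>x\<in>h ` {..d}. sc (\<beta> x) (v x)) = 0" .
    have "(\<Sum>x\<in>h ` {..d}. sc (\<beta> x) (v x)) \<noteq> 0"
      using normalD[OF normal_one, of "h ` {..d}" "h d" \<beta>] Rnz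
      by (auto simp: h_def \<beta>_def d_def)
    then show False using z by simp
  qed
qed

lemma range_ev_subalg: "subalgebra sc (range ev)"
  unfolding subalgebra_def
proof (intro conjI ballI allI)
  show "1 \<in> range ev" by (metis ev_1 rangeI)
  fix x y assume "x \<in> range ev" "y \<in> range ev"
  then obtain P Q where "x = ev P" "y = ev Q" by blast
  then show "x + y \<in> range ev" "x * y \<in> range ev"
    by (metis ev_add rangeI, metis ev_mult rangeI)
next
  fix c x assume "x \<in> range ev"
  then obtain P where "x = ev P" by blast
  then show "sc c x \<in> range ev" by (metis ev_smult rangeI)
qed

lemma gen_eq: "gen_subalg sc a = range ev"
proof
  show "gen_subalg sc a \<subseteq> range ev"
    unfolding gen_subalg_def using range_ev_subalg ev_X by (intro Inter_lower) (auto intro: rangeI[of ev "[:0,1:]", simplified ev_X])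
  show "range ev \<subseteq> gen_subalg sc a"
    unfolding gen_subalg_def
  proof (intro Inter_greatest subsetI)
    fix B x assume B: "B \<in> {B. subalgebra sc B \<and> a \<in> B}" and x: "x \<in> range ev"
    then have sB: "subalgebra sc B" and aB: "a \<in> B" by auto
    have "ev P \<in> B" for P
    proof (induction P)
      case 0
      have "sc 0 1 \<in> B" using sB unfolding subalgebra_def by blast
      then show ?case by simp
    next
      case (pCons c P)
      have "sc c 1 \<in> B" "a * ev P \<in> B" using sB aB pCons.IH by (auto simp: subalgebra_def)
      then show ?case using sB by (simp add: ev_pCons subalgebra_def)
    qed
    then show "x \<in> B" using x by blast
  qed
qed

lemma zero_range[simp]: "0 \<in> range ev" by (metis ev_0 rangeI)

definition rep :: "'s set \<Rightarrow> ('s \<Rightarrow> 's) \<Rightarrow> 's \<Rightarrow> bool" where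
  "rep E p c \<longleftrightarrow> (\<forall>e\<in>E. p e \<in> range ev) \<and> (\<forall>e. e \<notin> E \<longrightarrow> p e = 0) \<and> c = (\<Sum>e\<in>E. p e * e)"

lemma rep_exists:
  assumes fin: "finite E" and c: "c \<in> span (v ` (UNIV \<times> E))"
  shows "\<exists>p. rep E p c"
proof -
  have "span (v ` (UNIV \<times> E)) \<subseteq> {c. \<exists>p. rep E p c}"
  proof (rule span_minimal)
    show "v ` (UNIV \<times> E) \<subseteq> {c. \<exists>p. rep E p c}"
    proof
      fix y assume "y \<in> v ` (UNIV \<times> E)"
      then obtain i e where y: "y = v (i, e)" "e \<in> E" by auto
      define p where "p x = (if x = e then pw i else 0)" for x
      have "(\<Sum>x\<in>E. p x * x) = (\<Sum>x\<in>E. if x = e then pw i * x else 0)"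
        by (rule sum.cong) (auto simp: p_def)
      also have "\<dots> = pw i * e" using fin y(2) by simp
      finally have "rep E p y" unfolding rep_def using y by (auto simp: p_def v_def pw_def)
      then show "y \<in> {c. \<exists>p. rep E p c}" by blast
    qed
    show "subspace {c. \<exists>p. rep E p c}"
    proof (rule subspaceI)
      have "rep E (\<lambda>_. 0) 0" unfolding rep_def by (auto intro: range_eqI[of _ ev 0])
      then show "0 \<in> {c. \<exists>p. rep E p c}" by blast
    next
      fix x y assume "x \<in> {c. \<exists>p. rep E p c}" "y \<in> {c. \<exists>p. rep E p c}"
      then obtain p q where p: "rep E p x" and q: "rep E q y" by blast
      have "rep E (\<lambda>e. p e + q e) (x + y)"
        unfolding rep_def
      proof (intro conjI ballI allI impI)
        fix e assume "e \<in> E"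
        then have "p e \<in> range ev" "q e \<in> range ev" using p q by (auto simp: rep_def)
        then obtain P Q where "p e = ev P" "q e = ev Q" by blast
        then show "p e + q e \<in> range ev" by (metis ev_add rangeI)
      next
        fix e assume "e \<notin> E" then show "p e + q e = 0" using p q by (simp add: rep_def)
      next
        show "x + y = (\<Sum>e\<in>E. (p e + q e) * e)"
          using p q by (simp add: rep_def distr sum.distrib)
      qed
      then show "x + y \<in> {c. \<exists>p. rep E p c}" by blast
    next
      fix k x assume "x \<in> {c. \<exists>p. rep E p c}"
      then obtain p where p: "rep E p x" by blast
      have "rep E (\<lambda>e. sc k (p e)) (sc k x)"
        unfolding rep_def
      proof (intro conjI ballI allI impI)
        fix e assume "e \<in> E"
        then have "p e \<in> range ev" using p by (auto simp: rep_def)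
        then obtain P where "p e = ev P" by blast
        then show "sc k (p e) \<in> range ev" by (metis ev_smult rangeI)
      next
        fix e assume "e \<notin> E" then show "sc k (p e) = 0" using p by (simp add: rep_def)
      next
        show "sc k x = (\<Sum>e\<in>E. sc k (p e) * e)"
          using p by (simp add: rep_def scale_sum_right sc_mult_left)
      qed
      then show "sc k x \<in> {c. \<exists>p. rep E p c}" by blast
    qed
  qed
  then show ?thesis using c by blast
qed

lemma rep_unique:
  assumes fin: "finite E" and nE: "normal (UNIV \<times> E)" and p: "rep E p c" and q: "rep E q c"
  shows "p = q"
proof -
  have "\<forall>e\<in>E. \<exists>P. p e = ev P" using p by (auto simp: rep_def)
  then obtain P where P: "\<forall>e\<in>E. p e = ev (P e)" by metis
  have "\<forall>e\<in>E. \<exists>Q. q e = ev Q" using q by (auto simp: rep_def)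
  then obtain Q where Q: "\<forall>e\<in>E. q e = ev (Q e)" by metis
  define D where "D e = P e - Q e" for e
  have sum0: "(\<Sum>e\<in>E. ev (D e) * e) = 0"
  proof -
    have "(\<Sum>e\<in>E. ev (D e) * e) = (\<Sum>e\<in>E. p e * e - q e * e)"
      by (rule sum.cong) (auto simp: D_def ev_diff P Q mult_diff_left)
    also have "\<dots> = c - c" using p q by (simp add: rep_def sum_subtractf)
    finally show ?thesis by simp
  qed
  have D0: "D e = 0" if eE: "e \<in> E" for e
  proof (rule ccontr)
    assume Dnz: "D e \<noteq> 0"
    define N where "N = Max ((\<lambda>e. degree (D e)) ` E)"
    have degN: "e' \<in> E \<Longrightarrow> degree (D e') \<le> N" for e' using fin by (auto simp: N_def)
    define \<beta> where "\<beta> (x :: nat \<times> 's) = coeff (D (snd x)) (fst x)" for x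
    have "(\<Sum>e\<in>E. ev (D e) * e) = (\<Sum>e\<in>E. \<Sum>i\<le>N. sc (\<beta> (i, e)) (v (i, e)))"
    proof (rule sum.cong)
      fix e' assume "e' \<in> E"
      then have "ev (D e') = (\<Sum>i\<le>N. sc (coeff (D e') i) (pw i))" using degN ev_expandN by blast
      then show "ev (D e') * e' = (\<Sum>i\<le>N. sc (\<beta> (i, e')) (v (i, e')))"
        by (simp add: sum_mult_left sc_mult_left \<beta>_def v_def)
    qed simp
    also have "\<dots> = (\<Sum>i\<le>N. \<Sum>e\<in>E. sc (\<beta> (i, e)) (v (i, e)))" by (rule sum.swap)
    also have "\<dots> = (\<Sum>x\<in>{..N} \<times> E. sc (\<beta> x) (v x))"
      by (simp add: sum.cartesian_product)
    finally have z: "(\<Sum>x\<in>{..N} \<times> E. sc (\<beta> x) (v x)) = 0" using sum0 by simp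
    have "(degree (D e), e) \<in> {..N} \<times> E" using eE degN by auto
    moreover have "\<beta> (degree (D e), e) \<noteq> 0" using Dnz by (simp add: \<beta>_def)
    ultimately have "(\<Sum>x\<in>{..N} \<times> E. sc (\<beta> x) (v x)) \<noteq> 0"
      using normalD[OF nE, of "{..N} \<times> E" "(degree (D e), e)" \<beta>] fin by auto
    then show False using z by simp
  qed
  show "p = q"
  proof
    fix e show "p e = q e"
    proof (cases "e \<in> E")
      case True
      then have "P e = Q e" using D0 by (simp add: D_def)
      then show ?thesis using P Q True by simp
    next
      case False
      then show ?thesis using p q by (simp add: rep_def)
    qed
  qed
qed

end

theorem theorem2p8:
  fixes sc :: "'k::field \<Rightarrow> 's::{ab_group_add,times,one} \<Rightarrow> 's"
    and chi :: "'s \<Rightarrow> int" and a :: 's and l :: nat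
  assumes "(2::'k) \<noteq> 0"
    and "nonassoc_algebra sc"
    and "pseudo_degree chi"
    and "a \<in> nucleus"
    and "a \<noteq> 0" and "chi a > 0"
    and "l > 0"
    and "cond_D sc chi l (centralizer a)"
  shows "(\<exists>f. poly_alg_iso sc f (gen_subalg sc a)) \<and>
         (\<forall>p\<in>gen_subalg sc a. \<forall>c\<in>centralizer a. p * c \<in> centralizer a) \<and>
         (\<exists>E. left_basis (gen_subalg sc a) (centralizer a) E \<and> int (card E) \<le> int l * chi a)"
proof -
  have vs: "vector_space sc"
    and d: "\<forall>x y z::'s. (x + y) * z = x * z + y * z \<and> z * (x + y) = z * x + z * y"
    and s: "\<forall>c x y. sc c (x * y) = sc c x * y \<and> sc c (x * y) = x * sc c y"
    and o: "\<forall>x::'s. 1 * x = x \<and> x * 1 = x"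
    using assms(2) unfolding nonassoc_algebra_def by blast+
  have p1: "\<forall>x y. x \<noteq> 0 \<longrightarrow> y \<noteq> 0 \<longrightarrow> x * y \<noteq> 0 \<and> chi (x * y) = chi x + chi y"
    and p2: "\<forall>x y. x \<noteq> 0 \<longrightarrow> y \<noteq> 0 \<longrightarrow> x + y \<noteq> 0 \<longrightarrow> chi (x + y) \<le> max (chi x) (chi y)"
    using assms(3) unfolding pseudo_degree_def by blast+
  have n: "\<forall>b c. a * (b * c) = (a * b) * c \<and> (b * a) * c = b * (a * c) \<and> (b * c) * a = b * (c * a)"
    using assms(4) unfolding nucleus_def by simp
  have st: "setting sc chi a l"
    apply (rule setting.intro[OF vs], rule setting_axioms.intro)
    using d apply blast
    using d apply blast
    using s apply blast
    using s apply blast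
    using o apply blast
    using o apply blast
    using p1 apply blast
    using p1 apply blast
    using p2 apply blast
    using n apply blast
    using n apply blast
    using n apply blast
    using assms(5-8) by auto
  interpret setting sc chi a l by (rule st)
  have P1: "\<exists>f. poly_alg_iso sc f (gen_subalg sc a)"
  proof
    show "poly_alg_iso sc ev (gen_subalg sc a)"
      unfolding poly_alg_iso_def gen_eq
      using ev_inj by (auto simp: bij_betw_def ev_add ev_mult ev_smult)
  qed
  have P2: "\<forall>p\<in>gen_subalg sc a. \<forall>c\<in>centralizer a. p * c \<in> centralizer a"
    unfolding gen_eq using ev_mult_C by blast
  obtain E where fin: "finite E" and EC: "E \<subseteq> centralizer a" and nE: "normal (UNIV \<times> E)"
    and sp: "centralizer a \<subseteq> span (v ` (UNIV \<times> E))"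
    using exists_basis by blast
  have lb: "left_basis (gen_subalg sc a) (centralizer a) E"
    unfolding left_basis_def gen_eq
  proof (intro conjI ballI fin EC)
    fix c assume "c \<in> centralizer a"
    then obtain p where p: "rep E p c" using rep_exists[OF fin] sp by blast
    show "\<exists>!p. (\<forall>e\<in>E. p e \<in> range ev) \<and> (\<forall>e. e \<notin> E \<longrightarrow> p e = 0) \<and> c = (\<Sum>e\<in>E. p e * e)"
    proof (rule ex1I)
      show "(\<forall>e\<in>E. p e \<in> range ev) \<and> (\<forall>e. e \<notin> E \<longrightarrow> p e = 0) \<and> c = (\<Sum>e\<in>E. p e * e)"
        using p by (simp add: rep_def)
      fix q assume "(\<forall>e\<in>E. q e \<in> range ev) \<and> (\<forall>e. e \<notin> E \<longrightarrow> q e = 0) \<and> c = (\<Sum>e\<in>E. q e * e)"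
      then have "rep E q c" by (simp add: rep_def)
      then show "q = p" using rep_unique[OF fin nE _ p] by blast
    qed
  qed
  have "card E \<le> l * nat (chi a)" by (rule card_bound[OF fin EC nE])
  then have "int (card E) \<le> int l * chi a" using assms(6)
    by (metis of_nat_le_iff of_nat_mult int_nat_eq less_le_not_le)
  then show ?thesis using P1 P2 lb by blast
qed

end
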